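(* Let $\mathcal{C}$ be a regular category with terminal object $\mathbf{1}$, let $X$ be an object, and let $R$ be a subobject of $X \times X$ which is very weakly point surjective: for every subobject $P$ of $X$ there is an arrow $c : \mathbf{1} \to X$ with $\langle c, c\rangle^*(R) = c^*(P)$ in $\mathsf{Sub}(\mathbf{1})$. Then every natural transformation $\tau : \mathsf{Sub} \Rightarrow \mathsf{Sub}$ has a fixpoint, i.e. there is $s \in \mathsf{Sub}(\mathbf{1})$ with $\tau_{\mathbf{1}}(s) = s$.
   Context: A regular category is a well-powered category with finite limits and images, with images stable under pullback. For an object $A$, $\mathsf{Sub}(A)$ is the poset of subobjects of $A$ (equivalence classes of monomorphisms into $A$, where $m_1 \lesssim m_2$ if $m_1$ factors through $m_2$). For $f : A \to B$, $f^* : \mathsf{Sub}(B) \to \mathsf{Sub}(A)$ is pullback along $f$; this gives a functor $\mathsf{Sub} : \mathcal{C}^{op} \to \mathbf{Set}$. A natural transformation $\tau : \mathsf{Sub} \Rightarrow \mathsf{Sub}$ is a family of functions $\tau_A : \mathsf{Sub}(A) \to \mathsf{Sub}(A)$ with $f^* \circ \tau_B = \tau_A \circ f^*$ for every $f : A \to B$. $\langle c, c\rangle : \mathbf{1} \to X \times X$ is the pairing. *)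

theory Defs
  imports Main
begin

text \<open>Elementary category theory, sufficient to state the result.
  A category has objects of type 'o and arrows of type 'a; Comp g f is g after f.\<close>

record ('o, 'a) cat =
  Obj  :: "'o set"
  Arr  :: "'a set"
  Dom  :: "'a \<Rightarrow> 'o"
  Cod  :: "'a \<Rightarrow> 'o"
  Idt  :: "'o \<Rightarrow> 'a"
  Comp :: "'a \<Rightarrow> 'a \<Rightarrow> 'a"

definition hom :: "('o, 'a) cat \<Rightarrow> 'o \<Rightarrow> 'o \<Rightarrow> 'a set" where
  "hom C A B = {f \<in> Arr C. Dom C f = A \<and> Cod C f = B}"

definition is_category :: "('o, 'a) cat \<Rightarrow> bool" where
  "is_category C \<longleftrightarrow>
     (\<forall>f\<in>Arr C. Dom C f \<in> Obj C \<and> Cod C f \<in> Obj C) \<and>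
     (\<forall>A\<in>Obj C. Idt C A \<in> hom C A A) \<and>
     (\<forall>f\<in>Arr C. \<forall>g\<in>Arr C. Cod C f = Dom C g \<longrightarrow> Comp C g f \<in> hom C (Dom C f) (Cod C g)) \<and>
     (\<forall>f\<in>Arr C. Comp C (Idt C (Cod C f)) f = f \<and> Comp C f (Idt C (Dom C f)) = f) \<and>
     (\<forall>f\<in>Arr C. \<forall>g\<in>Arr C. \<forall>h\<in>Arr C. Cod C f = Dom C g \<longrightarrow> Cod C g = Dom C h \<longrightarrow>
         Comp C h (Comp C g f) = Comp C (Comp C h g) f)"

definition mono :: "('o, 'a) cat \<Rightarrow> 'a \<Rightarrow> bool" where
  "mono C m \<longleftrightarrow> m \<in> Arr C \<and>
     (\<forall>g\<in>Arr C. \<forall>h\<in>Arr C. Cod C g = Dom C m \<longrightarrow> Cod C h = Dom C m \<longrightarrow> Dom C g = Dom C h \<longrightarrow>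
        Comp C m g = Comp C m h \<longrightarrow> g = h)"

definition is_terminal :: "('o, 'a) cat \<Rightarrow> 'o \<Rightarrow> bool" where
  "is_terminal C T \<longleftrightarrow> T \<in> Obj C \<and> (\<forall>A\<in>Obj C. \<exists>!f. f \<in> hom C A T)"

definition is_pullback :: "('o, 'a) cat \<Rightarrow> 'a \<Rightarrow> 'a \<Rightarrow> 'a \<Rightarrow> 'a \<Rightarrow> bool" where
  "is_pullback C f g p q \<longleftrightarrow>
     f \<in> Arr C \<and> g \<in> Arr C \<and> Cod C f = Cod C g \<and>
     p \<in> Arr C \<and> q \<in> Arr C \<and> Dom C p = Dom C q \<and>
     Cod C p = Dom C f \<and> Cod C q = Dom C g \<and>
     Comp C f p = Comp C g q \<and>
     (\<forall>p'\<in>Arr C. \<forall>q'\<in>Arr C. Dom C p' = Dom C q' \<longrightarrow> Cod C p' = Dom C f \<longrightarrow>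
        Cod C q' = Dom C g \<longrightarrow> Comp C f p' = Comp C g q' \<longrightarrow>
        (\<exists>!h. h \<in> hom C (Dom C p') (Dom C p) \<and> Comp C p h = p' \<and> Comp C q h = q'))"

definition is_product :: "('o, 'a) cat \<Rightarrow> 'o \<Rightarrow> 'o \<Rightarrow> 'o \<Rightarrow> 'a \<Rightarrow> 'a \<Rightarrow> bool" where
  "is_product C A B P p1 p2 \<longleftrightarrow>
     A \<in> Obj C \<and> B \<in> Obj C \<and> P \<in> Obj C \<and> p1 \<in> hom C P A \<and> p2 \<in> hom C P B \<and>
     (\<forall>W\<in>Obj C. \<forall>f\<in>hom C W A. \<forall>g\<in>hom C W B.
        \<exists>!h. h \<in> hom C W P \<and> Comp C p1 h = f \<and> Comp C p2 h = g)"

definition pairing :: "('o, 'a) cat \<Rightarrow> 'a \<Rightarrow> 'a \<Rightarrow> 'a \<Rightarrow> 'a \<Rightarrow> 'a" where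
  "pairing C p1 p2 f g =
     (THE h. h \<in> hom C (Dom C f) (Dom C p1) \<and> Comp C p1 h = f \<and> Comp C p2 h = g)"

definition factors :: "('o, 'a) cat \<Rightarrow> 'a \<Rightarrow> 'a \<Rightarrow> bool" where
  "factors C m1 m2 \<longleftrightarrow> (\<exists>h \<in> hom C (Dom C m1) (Dom C m2). m1 = Comp C m2 h)"

definition monos_into :: "('o, 'a) cat \<Rightarrow> 'o \<Rightarrow> 'a set" where
  "monos_into C A = {m. mono C m \<and> Cod C m = A}"

definition Sub :: "('o, 'a) cat \<Rightarrow> 'o \<Rightarrow> 'a set set" where
  "Sub C A = {{m' \<in> monos_into C A. factors C m m' \<and> factors C m' m} | m. m \<in> monos_into C A}"

definition pb_sub :: "('o, 'a) cat \<Rightarrow> 'a \<Rightarrow> 'a set \<Rightarrow> 'a set" where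
  "pb_sub C f S = {m'. m' \<in> monos_into C (Dom C f) \<and> (\<exists>m\<in>S. \<exists>g. is_pullback C f m m' g)}"

definition is_image :: "('o, 'a) cat \<Rightarrow> 'a \<Rightarrow> 'a \<Rightarrow> bool" where
  "is_image C f m \<longleftrightarrow> f \<in> Arr C \<and> m \<in> monos_into C (Cod C f) \<and> factors C f m \<and>
     (\<forall>m' \<in> monos_into C (Cod C f). factors C f m' \<longrightarrow> factors C m m')"

definition has_terminal :: "('o, 'a) cat \<Rightarrow> bool" where
  "has_terminal C \<longleftrightarrow> (\<exists>T. is_terminal C T)"

definition has_pullbacks :: "('o, 'a) cat \<Rightarrow> bool" where
  "has_pullbacks C \<longleftrightarrow> (\<forall>f\<in>Arr C. \<forall>g\<in>Arr C. Cod C f = Cod C g \<longrightarrow> (\<exists>p q. is_pullback C f g p q))"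

text \<open>Finite limits: terminal object and pullbacks (equivalent to all finite limits).\<close>
definition has_finite_limits :: "('o, 'a) cat \<Rightarrow> bool" where
  "has_finite_limits C \<longleftrightarrow> has_terminal C \<and> has_pullbacks C"

definition has_images :: "('o, 'a) cat \<Rightarrow> bool" where
  "has_images C \<longleftrightarrow> (\<forall>f\<in>Arr C. \<exists>m. is_image C f m)"

definition images_pullback_stable :: "('o, 'a) cat \<Rightarrow> bool" where
  "images_pullback_stable C \<longleftrightarrow>
     (\<forall>f m g f' gf m' gm. is_image C f m \<longrightarrow> is_pullback C g f f' gf \<longrightarrow>
        is_pullback C g m m' gm \<longrightarrow> is_image C f' m')"

text \<open>Well-poweredness is automatic here: Sub C A is always a set.\<close>
definition regular_category :: "('o, 'a) cat \<Rightarrow> bool" where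
  "regular_category C \<longleftrightarrow> is_category C \<and> has_finite_limits C \<and> has_images C \<and>
     images_pullback_stable C"

definition nat_trans_Sub :: "('o, 'a) cat \<Rightarrow> ('o \<Rightarrow> 'a set \<Rightarrow> 'a set) \<Rightarrow> bool" where
  "nat_trans_Sub C \<tau> \<longleftrightarrow>
     (\<forall>A\<in>Obj C. \<forall>S\<in>Sub C A. \<tau> A S \<in> Sub C A) \<and>
     (\<forall>f\<in>Arr C. \<forall>S\<in>Sub C (Cod C f). pb_sub C f (\<tau> (Cod C f) S) = \<tau> (Dom C f) (pb_sub C f S))"

end

theory Submission
  imports Defs
begin

locale catx = fixes C :: "('o,'a) cat" assumes cat: "is_category C"
begin

lemma arr_obj: "f \<in> Arr C \<Longrightarrow> Dom C f \<in> Obj C \<and> Cod C f \<in> Obj C"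
  using cat unfolding is_category_def by blast
lemma idt: "A \<in> Obj C \<Longrightarrow> Idt C A \<in> Arr C \<and> Dom C (Idt C A) = A \<and> Cod C (Idt C A) = A"
  using cat unfolding is_category_def hom_def by blast
lemma comp: "f \<in> Arr C \<Longrightarrow> g \<in> Arr C \<Longrightarrow> Cod C f = Dom C g \<Longrightarrow>
   Comp C g f \<in> Arr C \<and> Dom C (Comp C g f) = Dom C f \<and> Cod C (Comp C g f) = Cod C g"
  using cat unfolding is_category_def hom_def by blast
lemma comp_arr[simp]: "f \<in> Arr C \<Longrightarrow> g \<in> Arr C \<Longrightarrow> Cod C f = Dom C g \<Longrightarrow> Comp C g f \<in> Arr C"
  using comp by blast
lemma dom_comp[simp]: "f \<in> Arr C \<Longrightarrow> g \<in> Arr C \<Longrightarrow> Cod C f = Dom C g \<Longrightarrow> Dom C (Comp C g f) = Dom C f"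
  using comp by blast
lemma cod_comp[simp]: "f \<in> Arr C \<Longrightarrow> g \<in> Arr C \<Longrightarrow> Cod C f = Dom C g \<Longrightarrow> Cod C (Comp C g f) = Cod C g"
  using comp by blast
lemma idl: "f \<in> Arr C \<Longrightarrow> Comp C (Idt C (Cod C f)) f = f"
  using cat unfolding is_category_def by blast
lemma idr: "f \<in> Arr C \<Longrightarrow> Comp C f (Idt C (Dom C f)) = f"
  using cat unfolding is_category_def by blast
lemma assoc: "f \<in> Arr C \<Longrightarrow> g \<in> Arr C \<Longrightarrow> h \<in> Arr C \<Longrightarrow> Cod C f = Dom C g \<Longrightarrow> Cod C g = Dom C h \<Longrightarrow>
   Comp C h (Comp C g f) = Comp C (Comp C h g) f"
  using cat unfolding is_category_def by blast

lemma factors_refl: "m \<in> Arr C \<Longrightarrow> factors C m m"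
  unfolding factors_def hom_def using idt[of "Dom C m"] idr[of m] arr_obj[of m] by force

lemma factors_trans: "m1 \<in> Arr C \<Longrightarrow> m2 \<in> Arr C \<Longrightarrow> m3 \<in> Arr C \<Longrightarrow> factors C m1 m2 \<Longrightarrow> factors C m2 m3 \<Longrightarrow> factors C m1 m3"
proof -
  assume a: "m1 \<in> Arr C" "m2 \<in> Arr C" "m3 \<in> Arr C" "factors C m1 m2" "factors C m2 m3"
  then obtain h k where h: "h \<in> hom C (Dom C m1) (Dom C m2)" "m1 = Comp C m2 h"
    and k: "k \<in> hom C (Dom C m2) (Dom C m3)" "m2 = Comp C m3 k" unfolding factors_def by blast
  have ha: "h \<in> Arr C" "Dom C h = Dom C m1" "Cod C h = Dom C m2" using h(1) unfolding hom_def by auto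
  have ka: "k \<in> Arr C" "Dom C k = Dom C m2" "Cod C k = Dom C m3" using k(1) unfolding hom_def by auto
  have "m1 = Comp C (Comp C m3 k) h" using h(2) k(2) by simp
  also have "\<dots> = Comp C m3 (Comp C k h)" using assoc[OF ha(1) ka(1) a(3)] ha(3) ka(2,3) by simp
  finally have "m1 = Comp C m3 (Comp C k h)" .
  moreover have "Comp C k h \<in> hom C (Dom C m1) (Dom C m3)" using ha ka unfolding hom_def by simp
  ultimately show ?thesis unfolding factors_def by blast
qed

definition cls where "cls A m = {m' \<in> monos_into C A. factors C m m' \<and> factors C m' m}"

lemma monos_arr: "m \<in> monos_into C A \<Longrightarrow> m \<in> Arr C \<and> Cod C m = A \<and> mono C m"
  unfolding monos_into_def mono_def by auto

lemma Sub_cls: "S \<in> Sub C A \<Longrightarrow> m \<in> S \<Longrightarrow> S = cls A m"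
proof -
  assume S: "S \<in> Sub C A" and m: "m \<in> S"
  then obtain m0 where m0: "m0 \<in> monos_into C A" and Sd: "S = cls A m0"
    unfolding Sub_def cls_def by blast
  have mm: "m \<in> monos_into C A" "factors C m0 m" "factors C m m0" using m Sd cls_def by auto
  have a0: "m0 \<in> Arr C" and am: "m \<in> Arr C" using m0 mm(1) monos_arr by auto
  show ?thesis unfolding Sd cls_def
  proof (intro Collect_cong iffI conjI; (elim conjE)?)
    fix x assume x: "x \<in> monos_into C A" and f1: "factors C m0 x" and f2: "factors C x m0"
    have ax: "x \<in> Arr C" using x monos_arr by auto
    show "factors C m x" by (rule factors_trans[OF am a0 ax mm(3) f1])
    show "factors C x m" by (rule factors_trans[OF ax a0 am f2 mm(2)])
  next
    fix x assume x: "x \<in> monos_into C A" and f1: "factors C m x" and f2: "factors C x m"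
    have ax: "x \<in> Arr C" using x monos_arr by auto
    show "factors C m0 x" by (rule factors_trans[OF a0 am ax mm(2) f1])
    show "factors C x m0" by (rule factors_trans[OF ax am a0 f2 mm(3)])
  qed
qed

lemma cls_self: "m \<in> monos_into C A \<Longrightarrow> m \<in> cls A m"
  unfolding cls_def using factors_refl monos_arr by blast

lemma cls_Sub: "m \<in> monos_into C A \<Longrightarrow> cls A m \<in> Sub C A"
  unfolding Sub_def cls_def by blast

lemma Sub_same: "S1 \<in> Sub C A \<Longrightarrow> S2 \<in> Sub C A \<Longrightarrow> m \<in> S1 \<Longrightarrow> m \<in> S2 \<Longrightarrow> S1 = S2"
  using Sub_cls by metis

lemma Sub_ne: "S \<in> Sub C A \<Longrightarrow> \<exists>m. m \<in> S"
  unfolding Sub_def using cls_self unfolding cls_def by blast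

lemma Sub_monos: "S \<in> Sub C A \<Longrightarrow> m \<in> S \<Longrightarrow> m \<in> monos_into C A"
  unfolding Sub_def by blast

lemma pb_univ: "is_pullback C f m p q \<Longrightarrow> p' \<in> Arr C \<Longrightarrow> q' \<in> Arr C \<Longrightarrow> Dom C p' = Dom C q' \<Longrightarrow>
  Cod C p' = Dom C f \<Longrightarrow> Cod C q' = Dom C m \<Longrightarrow> Comp C f p' = Comp C m q' \<Longrightarrow>
  \<exists>!h. h \<in> hom C (Dom C p') (Dom C p) \<and> Comp C p h = p' \<and> Comp C q h = q'"
  unfolding is_pullback_def by blast

lemma pb_basic: "is_pullback C f m p q \<Longrightarrow> f \<in> Arr C \<and> m \<in> Arr C \<and> Cod C f = Cod C m \<and>
     p \<in> Arr C \<and> q \<in> Arr C \<and> Dom C p = Dom C q \<and>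
     Cod C p = Dom C f \<and> Cod C q = Dom C m \<and> Comp C f p = Comp C m q"
  unfolding is_pullback_def by blast

lemma pb_mono: "is_pullback C f m p q \<Longrightarrow> mono C m \<Longrightarrow> mono C p"
proof -
  assume pb: "is_pullback C f m p q" and mm: "mono C m"
  note P = pb_basic[OF pb]
  show ?thesis unfolding mono_def
  proof (intro conjI ballI impI)
    show "p \<in> Arr C" using P by blast
    fix g h assume g: "g \<in> Arr C" and h: "h \<in> Arr C" and cg: "Cod C g = Dom C p" and ch: "Cod C h = Dom C p"
      and dd: "Dom C g = Dom C h" and e: "Comp C p g = Comp C p h"
    have "Comp C m (Comp C q g) = Comp C (Comp C m q) g" using assoc P g cg by auto
    also have "\<dots> = Comp C (Comp C f p) g" using P by auto
    also have "\<dots> = Comp C f (Comp C p g)" using assoc P g cg by auto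
    also have "\<dots> = Comp C f (Comp C p h)" using e by simp
    also have "\<dots> = Comp C (Comp C f p) h" using assoc P h ch by auto
    also have "\<dots> = Comp C (Comp C m q) h" using P by auto
    also have "\<dots> = Comp C m (Comp C q h)" using assoc P h ch by auto
    finally have "Comp C m (Comp C q g) = Comp C m (Comp C q h)" .
    then have qe: "Comp C q g = Comp C q h" using mm unfolding mono_def
      using P g h cg ch dd by auto
    have fe: "Comp C f (Comp C p g) = Comp C m (Comp C q g)"
      using assoc P g cg by auto
    have "\<exists>!u. u \<in> hom C (Dom C (Comp C p g)) (Dom C p) \<and> Comp C p u = Comp C p g \<and> Comp C q u = Comp C q g"
      using P g cg fe by (intro pb_univ[OF pb]) auto
    moreover have "g \<in> hom C (Dom C (Comp C p g)) (Dom C p)" "h \<in> hom C (Dom C (Comp C p g)) (Dom C p)"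
      using P g h cg ch dd unfolding hom_def by auto
    ultimately show "g = h" using e qe by metis
  qed
qed


lemma pb_factor:
  assumes pb: "is_pullback C f m p q" and pb0: "is_pullback C f m0 p0 q0" and fa: "factors C m0 m"
  shows "factors C p0 p"
proof -
  note P = pb_basic[OF pb] and P0 = pb_basic[OF pb0]
  obtain k where k: "k \<in> hom C (Dom C m0) (Dom C m)" "m0 = Comp C m k" using fa unfolding factors_def by blast
  have karr: "k \<in> Arr C" "Dom C k = Dom C m0" "Cod C k = Dom C m" using k unfolding hom_def by auto
  have e: "Comp C f p0 = Comp C m (Comp C k q0)"
  proof -
    have "Comp C f p0 = Comp C m0 q0" using P0 by simp
    also have "\<dots> = Comp C (Comp C m k) q0" using k(2) by simp
    also have "\<dots> = Comp C m (Comp C k q0)" using assoc[of q0 k m] karr P P0 by simp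
    finally show ?thesis .
  qed
  have kq: "Comp C k q0 \<in> Arr C" "Dom C (Comp C k q0) = Dom C p0" "Cod C (Comp C k q0) = Dom C m"
    using karr P0 by simp_all
  have "\<exists>!h. h \<in> hom C (Dom C p0) (Dom C p) \<and> Comp C p h = p0 \<and> Comp C q h = Comp C k q0"
    using pb_univ[OF pb _ kq(1) kq(2)[symmetric] _ kq(3) e] P0 by simp
  then obtain h where "h \<in> hom C (Dom C p0) (Dom C p)" "Comp C p h = p0" by blast
  then show ?thesis unfolding factors_def by blast
qed

lemma pb_iso:
  assumes pb: "is_pullback C f m p q" and mm: "mono C m" and mm': "mono C m'"
    and fa1: "factors C m' p" and fa2: "factors C p m'"
  shows "is_pullback C f m m' (Comp C q (SOME h. h \<in> hom C (Dom C m') (Dom C p) \<and> m' = Comp C p h))"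
proof -
  note P = pb_basic[OF pb]
  define h where "h = (SOME h. h \<in> hom C (Dom C m') (Dom C p) \<and> m' = Comp C p h)"
  have h: "h \<in> hom C (Dom C m') (Dom C p) \<and> m' = Comp C p h" unfolding h_def
    using fa1 unfolding factors_def by (rule someI2_bex) auto
  obtain k where k: "k \<in> hom C (Dom C p) (Dom C m')" "p = Comp C m' k" using fa2 unfolding factors_def by blast
  have m'a: "m' \<in> Arr C" using mm' unfolding mono_def by blast
  have ha: "h \<in> Arr C" "Dom C h = Dom C m'" "Cod C h = Dom C p" "m' = Comp C p h" using h unfolding hom_def by auto
  have ka: "k \<in> Arr C" "Dom C k = Dom C p" "Cod C k = Dom C m'" using k unfolding hom_def by auto
  have cm': "Cod C m' = Dom C f" using ha(1,3) P by (metis cod_comp ha(4))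
  have hk: "Comp C h k \<in> Arr C" "Dom C (Comp C h k) = Dom C p" "Cod C (Comp C h k) = Dom C p"
    using ha(1-3) ka by auto
  have phk: "Comp C p (Comp C h k) = p"
  proof -
    have "Comp C p (Comp C h k) = Comp C (Comp C p h) k" using assoc[of k h p] ha(1-3) ka P by auto
    also have "\<dots> = p" using ha(4) k(2) by simp
    finally show ?thesis .
  qed
  have "Comp C m (Comp C q (Comp C h k)) = Comp C (Comp C m q) (Comp C h k)"
    using assoc[of "Comp C h k" q m] hk P by auto
  also have "\<dots> = Comp C (Comp C f p) (Comp C h k)" using P by simp
  also have "\<dots> = Comp C f (Comp C p (Comp C h k))"
    using assoc[of "Comp C h k" p f] hk P by auto
  also have "\<dots> = Comp C m q" using phk P by simp
  finally have qhk: "Comp C q (Comp C h k) = q"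
    using mm unfolding mono_def using hk P by (metis comp_arr dom_comp cod_comp)
  have fm': "Comp C f m' = Comp C m (Comp C q h)"
    using ha(1-3) P assoc[of h p f] assoc[of h q m] by (auto simp: ha(4))
  show ?thesis unfolding h_def[symmetric] is_pullback_def
  proof (intro conjI ballI impI)
    show "f \<in> Arr C" "m \<in> Arr C" "Cod C f = Cod C m" "m' \<in> Arr C" "Comp C q h \<in> Arr C"
      "Dom C m' = Dom C (Comp C q h)" "Cod C m' = Dom C f" "Cod C (Comp C q h) = Dom C m"
      "Comp C f m' = Comp C m (Comp C q h)" using P m'a ha(1-3) cm' fm' by auto
    fix p' q' assume p': "p' \<in> Arr C" and q': "q' \<in> Arr C" and d: "Dom C p' = Dom C q'"
      and c1: "Cod C p' = Dom C f" and c2: "Cod C q' = Dom C m" and e: "Comp C f p' = Comp C m q'"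
    obtain u where u: "u \<in> hom C (Dom C p') (Dom C p)" "Comp C p u = p'" "Comp C q u = q'"
      using pb_univ[OF pb p' q' d c1 c2 e] by blast
    have ua: "u \<in> Arr C" "Dom C u = Dom C p'" "Cod C u = Dom C p" using u unfolding hom_def by auto
    have v1: "Comp C m' (Comp C k u) = p'" using assoc[of u k m'] ua ka m'a u(2) by (auto simp: k(2)[symmetric])
    have "Comp C (Comp C q h) (Comp C k u) = Comp C q (Comp C h (Comp C k u))"
      using assoc[of "Comp C k u" h q] ua ka ha(1-3) P by auto
    also have "\<dots> = Comp C q (Comp C (Comp C h k) u)" using assoc[of u k h] ua ka ha(1-3) by auto
    also have "\<dots> = Comp C (Comp C q (Comp C h k)) u" using assoc[of u "Comp C h k" q] ua hk P by auto
    finally have v2: "Comp C (Comp C q h) (Comp C k u) = q'" using qhk u by simp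
    have v0: "Comp C k u \<in> hom C (Dom C p') (Dom C m')" using ua ka unfolding hom_def by auto
    show "\<exists>!v. v \<in> hom C (Dom C p') (Dom C m') \<and> Comp C m' v = p' \<and> Comp C (Comp C q h) v = q'"
    proof (rule ex1I[of _ "Comp C k u"])
      show "Comp C k u \<in> hom C (Dom C p') (Dom C m') \<and> Comp C m' (Comp C k u) = p' \<and> Comp C (Comp C q h) (Comp C k u) = q'"
        using v0 v1 v2 by blast
      fix v assume v: "v \<in> hom C (Dom C p') (Dom C m') \<and> Comp C m' v = p' \<and> Comp C (Comp C q h) v = q'"
      then show "v = Comp C k u" using mm' v0 v1 unfolding mono_def hom_def by auto
    qed
  qed
qed

lemma pb_sub_cls:
  assumes S: "S \<in> Sub C (Cod C f)" and m: "m \<in> S" and pb: "is_pullback C f m p q"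
  shows "pb_sub C f S = cls (Dom C f) p"
proof -
  note P = pb_basic[OF pb]
  have mm: "m \<in> monos_into C (Cod C f)" using Sub_monos S m by blast
  have pm: "mono C p" using pb_mono[OF pb] mm monos_arr by blast
  show ?thesis
  proof
    show "pb_sub C f S \<subseteq> cls (Dom C f) p"
    proof
      fix m' assume "m' \<in> pb_sub C f S"
      then obtain m0 g where m': "m' \<in> monos_into C (Dom C f)" and m0: "m0 \<in> S" and pb0: "is_pullback C f m0 m' g"
        unfolding pb_sub_def by blast
      have "m0 \<in> cls (Cod C f) m" using Sub_cls[OF S m] m0 by simp
      then have "factors C m0 m" "factors C m m0" unfolding cls_def by auto
      then show "m' \<in> cls (Dom C f) p" unfolding cls_def
        using pb_factor[OF pb pb0] pb_factor[OF pb0 pb] m' by blast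
    qed
  next
    show "cls (Dom C f) p \<subseteq> pb_sub C f S"
    proof
      fix m' assume "m' \<in> cls (Dom C f) p"
      then have m': "m' \<in> monos_into C (Dom C f)" "factors C m' p" "factors C p m'" unfolding cls_def by auto
      then show "m' \<in> pb_sub C f S" unfolding pb_sub_def
        using pb_iso[OF pb _ _ m'(2,3)] mm monos_arr m m' by blast
    qed
  qed
qed

lemma pb_sub_Sub:
  assumes hp: "has_pullbacks C" and f: "f \<in> Arr C" and S: "S \<in> Sub C (Cod C f)"
  shows "pb_sub C f S \<in> Sub C (Dom C f)"
proof -
  obtain m where m: "m \<in> S" using Sub_ne S by blast
  have mm: "m \<in> monos_into C (Cod C f)" using Sub_monos S m by blast
  then obtain p q where pb: "is_pullback C f m p q" using hp f monos_arr unfolding has_pullbacks_def by metis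
  have "p \<in> monos_into C (Dom C f)" using pb_mono[OF pb] mm monos_arr pb unfolding is_pullback_def monos_into_def by blast
  then show ?thesis using pb_sub_cls[OF S m pb] cls_Sub by simp
qed

lemma pasting:
  assumes pb: "is_pullback C f m p q" and pb2: "is_pullback C g p p2 q2"
  shows "is_pullback C (Comp C f g) m p2 (Comp C q q2)"
proof -
  note P = pb_basic[OF pb] and P2 = pb_basic[OF pb2]
  have cg: "Cod C g = Dom C f" using P P2 by auto
  show ?thesis unfolding is_pullback_def
  proof (intro conjI ballI impI)
    show "Comp C f g \<in> Arr C" "m \<in> Arr C" "Cod C (Comp C f g) = Cod C m" "p2 \<in> Arr C"
      "Comp C q q2 \<in> Arr C" "Dom C p2 = Dom C (Comp C q q2)" "Cod C p2 = Dom C (Comp C f g)"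
      "Cod C (Comp C q q2) = Dom C m" using P P2 cg by auto
    have "Comp C (Comp C f g) p2 = Comp C f (Comp C g p2)" using assoc[of p2 g f] P P2 cg by auto
    also have "\<dots> = Comp C f (Comp C p q2)" using P2 by simp
    also have "\<dots> = Comp C (Comp C f p) q2" using assoc[of q2 p f] P P2 by auto
    also have "\<dots> = Comp C (Comp C m q) q2" using P by simp
    also have "\<dots> = Comp C m (Comp C q q2)" using assoc[of q2 q m] P P2 by auto
    finally show "Comp C (Comp C f g) p2 = Comp C m (Comp C q q2)" .
    fix p' q' assume p': "p' \<in> Arr C" and q': "q' \<in> Arr C" and d: "Dom C p' = Dom C q'"
      and c1: "Cod C p' = Dom C (Comp C f g)" and c2: "Cod C q' = Dom C m"
      and e: "Comp C (Comp C f g) p' = Comp C m q'"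
    have c1': "Cod C p' = Dom C g" using c1 P2 P cg dom_comp by metis
    have e': "Comp C f (Comp C g p') = Comp C m q'" using e assoc[of p' g f] p' c1' P2 P cg by auto
    have gp: "Comp C g p' \<in> Arr C" "Dom C (Comp C g p') = Dom C p'" "Cod C (Comp C g p') = Dom C f"
      using p' c1' P2 cg by auto
    have ex1: "\<exists>!u. u \<in> hom C (Dom C p') (Dom C p) \<and> Comp C p u = Comp C g p' \<and> Comp C q u = q'"
      using pb_univ[OF pb gp(1) q' _ gp(3) c2 e'] gp(2) d by simp
    obtain u where u: "u \<in> hom C (Dom C p') (Dom C p)" "Comp C p u = Comp C g p'" "Comp C q u = q'"
      and uu: "\<And>u'. u' \<in> hom C (Dom C p') (Dom C p) \<and> Comp C p u' = Comp C g p' \<and> Comp C q u' = q' \<Longrightarrow> u' = u"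
      using ex1E[OF ex1] by metis
    have ua: "u \<in> Arr C" "Dom C u = Dom C p'" "Cod C u = Dom C p" using u unfolding hom_def by auto
    obtain v where v: "v \<in> hom C (Dom C p') (Dom C p2)" "Comp C p2 v = p'" "Comp C q2 v = u"
      and vv: "\<And>v'. v' \<in> hom C (Dom C p') (Dom C p2) \<and> Comp C p2 v' = p' \<and> Comp C q2 v' = u \<Longrightarrow> v' = v"
    proof -
      have ex2: "\<exists>!v. v \<in> hom C (Dom C p') (Dom C p2) \<and> Comp C p2 v = p' \<and> Comp C q2 v = u"
        using pb_univ[OF pb2 p' ua(1) ua(2)[symmetric] c1' ua(3)] u(2) by simp
      assume r: "\<And>v. v \<in> hom C (Dom C p') (Dom C p2) \<Longrightarrow> Comp C p2 v = p' \<Longrightarrow> Comp C q2 v = u \<Longrightarrow>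
        (\<And>v'. v' \<in> hom C (Dom C p') (Dom C p2) \<and> Comp C p2 v' = p' \<and> Comp C q2 v' = u \<Longrightarrow> v' = v) \<Longrightarrow> thesis"
      show thesis using ex1E[OF ex2] r by metis
    qed
    have va: "v \<in> Arr C" "Dom C v = Dom C p'" "Cod C v = Dom C p2" using v unfolding hom_def by auto
    show "\<exists>!w. w \<in> hom C (Dom C p') (Dom C p2) \<and> Comp C p2 w = p' \<and> Comp C (Comp C q q2) w = q'"
    proof (rule ex1I[of _ v])
      show "v \<in> hom C (Dom C p') (Dom C p2) \<and> Comp C p2 v = p' \<and> Comp C (Comp C q q2) v = q'"
        using v u assoc[of v q2 q] va P P2 by auto
      fix w assume w: "w \<in> hom C (Dom C p') (Dom C p2) \<and> Comp C p2 w = p' \<and> Comp C (Comp C q q2) w = q'"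
      have wa: "w \<in> Arr C" "Dom C w = Dom C p'" "Cod C w = Dom C p2" using w unfolding hom_def by auto
      have "Comp C q2 w \<in> hom C (Dom C p') (Dom C p)" using wa P2 unfolding hom_def by auto
      moreover have "Comp C p (Comp C q2 w) = Comp C g p'"
        using assoc[of w q2 p] assoc[of w p2 g] wa P2 w by auto
      moreover have "Comp C q (Comp C q2 w) = q'" using assoc[of w q2 q] wa P P2 w by auto
      ultimately have "Comp C q2 w = u" using uu by blast
      then show "w = v" using vv w by blast
    qed
  qed
qed

end


lemma prod_univ: "is_product C A B P p1 p2 \<Longrightarrow> W \<in> Obj C \<Longrightarrow> f \<in> hom C W A \<Longrightarrow> g \<in> hom C W B \<Longrightarrow>
  \<exists>!h. h \<in> hom C W P \<and> Comp C p1 h = f \<and> Comp C p2 h = g"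
  unfolding is_product_def by blast

lemma prod_basic: "is_product C A B P p1 p2 \<Longrightarrow> p1 \<in> hom C P A \<and> p2 \<in> hom C P B"
  unfolding is_product_def by blast

lemma nat_nat: "nat_trans_Sub C \<tau> \<Longrightarrow> f \<in> Arr C \<Longrightarrow> S \<in> Sub C (Cod C f) \<Longrightarrow>
   pb_sub C f (\<tau> (Cod C f) S) = \<tau> (Dom C f) (pb_sub C f S)"
  unfolding nat_trans_Sub_def by blast

lemma nat_Sub: "nat_trans_Sub C \<tau> \<Longrightarrow> A \<in> Obj C \<Longrightarrow> S \<in> Sub C A \<Longrightarrow> \<tau> A S \<in> Sub C A"
  unfolding nat_trans_Sub_def by blast

lemma pb_ex: "has_pullbacks C \<Longrightarrow> f \<in> Arr C \<Longrightarrow> g \<in> Arr C \<Longrightarrow> Cod C f = Cod C g \<Longrightarrow> \<exists>p q. is_pullback C f g p q"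
  unfolding has_pullbacks_def by blast

theorem lemma5:
  fixes C :: "('o, 'a) cat" and T X P :: 'o and p1 p2 :: 'a and R :: "'a set"
    and \<tau> :: "'o \<Rightarrow> 'a set \<Rightarrow> 'a set"
  assumes "regular_category C"
    and "is_terminal C T"
    and "X \<in> Obj C"
    and "is_product C X X P p1 p2"
    and "R \<in> Sub C P"
    and "\<forall>Q\<in>Sub C X. \<exists>c\<in>hom C T X. pb_sub C (pairing C p1 p2 c c) R = pb_sub C c Q"
    and "nat_trans_Sub C \<tau>"
  shows "\<exists>s\<in>Sub C T. \<tau> T s = s"
proof -
  have cat: "is_category C" and hp: "has_pullbacks C"
    using assms(1) unfolding regular_category_def has_finite_limits_def by auto
  interpret catx C by (rule catx.intro[OF cat])
  have idX: "Idt C X \<in> hom C X X" using idt assms(3) unfolding hom_def by auto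
  obtain d where d: "d \<in> hom C X P" "Comp C p1 d = Idt C X" "Comp C p2 d = Idt C X"
    using prod_univ[OF assms(4) assms(3) idX idX] by blast
  have da: "d \<in> Arr C" "Dom C d = X" "Cod C d = P" using d unfolding hom_def by auto
  define D where "D = pb_sub C d R"
  have DS: "D \<in> Sub C X" unfolding D_def using pb_sub_Sub[OF hp da(1)] da assms(5) by simp
  define Q where "Q = \<tau> X D"
  have QS: "Q \<in> Sub C X" unfolding Q_def using nat_Sub[OF assms(7) assms(3) DS] .
  obtain c where c: "c \<in> hom C T X" and ceq: "pb_sub C (pairing C p1 p2 c c) R = pb_sub C c Q"
    using assms(6) QS by blast
  have ca: "c \<in> Arr C" "Dom C c = T" "Cod C c = X" using c unfolding hom_def by auto
  have p1a: "p1 \<in> Arr C" "Dom C p1 = P" "Cod C p1 = X" and p2a: "p2 \<in> Arr C" "Dom C p2 = P" "Cod C p2 = X"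
    using prod_basic[OF assms(4)] unfolding hom_def by auto
  have dc: "Comp C d c \<in> hom C T P" using ca da unfolding hom_def by auto
  have dc1: "Comp C p1 (Comp C d c) = c" using assoc[of c d p1] ca da p1a d(2) idl[of c] by auto
  have dc2: "Comp C p2 (Comp C d c) = c" using assoc[of c d p2] ca da p2a d(3) idl[of c] by auto
  have T: "T \<in> Obj C" using assms(2) unfolding is_terminal_def by blast
  have pair: "pairing C p1 p2 c c = Comp C d c"
    unfolding pairing_def ca(2) p1a(2)
  proof (rule the_equality)
    show "Comp C d c \<in> hom C T P \<and> Comp C p1 (Comp C d c) = c \<and> Comp C p2 (Comp C d c) = c"
      using dc dc1 dc2 by blast
    fix h assume "h \<in> hom C T P \<and> Comp C p1 h = c \<and> Comp C p2 h = c"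
    then show "h = Comp C d c" using prod_univ[OF assms(4) T c c] dc dc1 dc2 by blast
  qed
  obtain m where m: "m \<in> R" using Sub_ne assms(5) by blast
  have mm: "m \<in> monos_into C P" using Sub_monos assms(5) m by blast
  obtain m1 g1 where pb1: "is_pullback C d m m1 g1" proof -
    have "\<exists>p q. is_pullback C d m p q" using pb_ex[OF hp da(1), of m] da mm[THEN monos_arr] by simp
    then show ?thesis using that by blast
  qed
  have m1m0: "m1 \<in> monos_into C X" using pb_mono[OF pb1] mm[THEN monos_arr] pb_basic[OF pb1] da
    unfolding monos_into_def by simp
  have m1D: "m1 \<in> D" unfolding D_def pb_sub_def using pb1 m1m0 m da by blast
  have m1m: "m1 \<in> monos_into C X" using Sub_monos DS m1D by blast
  obtain m2 g2 where pb2: "is_pullback C c m1 m2 g2" proof -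
    have "\<exists>p q. is_pullback C c m1 p q" using pb_ex[OF hp ca(1), of m1] ca m1m[THEN monos_arr] by simp
    then show ?thesis using that by blast
  qed
  have m2m: "m2 \<in> monos_into C T" using pb_mono[OF pb2] m1m[THEN monos_arr] pb_basic[OF pb2] ca
    unfolding monos_into_def by simp
  have A: "m2 \<in> pb_sub C c D" unfolding pb_sub_def using m2m ca m1D pb2 by blast
  have pb3: "is_pullback C (Comp C d c) m m2 (Comp C g1 g2)" by (rule pasting[OF pb1 pb2])
  have dca: "Comp C d c \<in> Arr C" "Dom C (Comp C d c) = T" "Cod C (Comp C d c) = P" using dc unfolding hom_def by auto
  have B: "m2 \<in> pb_sub C (Comp C d c) R" unfolding pb_sub_def using m2m dca m pb3 by blast
  have S1: "pb_sub C c D \<in> Sub C T" using pb_sub_Sub[OF hp ca(1)] ca DS by simp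
  have S2: "pb_sub C (Comp C d c) R \<in> Sub C T" using pb_sub_Sub[OF hp dca(1)] dca assms(5) by simp
  have past: "pb_sub C c D = pb_sub C (Comp C d c) R" using Sub_same[OF S1 S2 A B] .
  have nat: "pb_sub C c (\<tau> X D) = \<tau> T (pb_sub C c D)"
    using nat_nat[OF assms(7) ca(1)] ca DS by simp
  define s where "s = pb_sub C c Q"
  have sS: "s \<in> Sub C T" unfolding s_def using pb_sub_Sub[OF hp ca(1)] ca QS by simp
  have "s = \<tau> T (pb_sub C c D)" unfolding s_def Q_def using nat .
  also have "\<dots> = \<tau> T s" using past pair ceq s_def by simp
  finally show ?thesis using sS by metis
qed

end
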